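(* Let $\tau\ge1$ be an integer and $h(z;\lambda)=z^{\tau+1}-z^{\tau}+\lambda$. Let $I\subseteq(0,\infty)$ be an interval and $z:I\to\mathbb C\setminus\mathbb R$ a continuous function with $h(z(\lambda);\lambda)=0$ for all $\lambda\in I$. Then $\lambda\mapsto|z(\lambda)|$ is strictly increasing on $I$. (That is, all roots of $h(\cdot;\lambda)$ with nonzero imaginary part have modulus increasing with $\lambda$.) *)

theory Defs
  imports "HOL-Analysis.Analysis"
begin

definition hpoly :: "nat \<Rightarrow> complex \<Rightarrow> real \<Rightarrow> complex" where
  "hpoly \<tau> z lam = z ^ (\<tau> + 1) - z ^ \<tau> + complex_of_real lam"

end

theory Submission
  imports Defs
begin

lemma abs_sin_nat: "\<bar>sin (real n * t)\<bar> \<le> real n * \<bar>sin t\<bar>"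
proof (induction n)
  case 0 then show ?case by simp
next
  case (Suc n)
  have "sin (real (Suc n) * t) = sin (real n * t) * cos t + cos (real n * t) * sin t"
    by (simp add: distrib_right sin_add)
  also have "\<bar>\<dots>\<bar> \<le> \<bar>sin (real n * t)\<bar> + \<bar>sin t\<bar>"
  proof -
    have "\<bar>sin (real n * t) * cos t\<bar> \<le> \<bar>sin (real n * t)\<bar>"
      by (simp add: abs_mult mult_left_le)
    moreover have "\<bar>cos (real n * t) * sin t\<bar> \<le> \<bar>sin t\<bar>"
      by (metis abs_ge_zero abs_cos_le_one mult_left_le_one_le abs_mult)
    ultimately show ?thesis by linarith
  qed
  finally show ?case using Suc.IH by (simp add: distrib_right)
qed

lemma angle_lemma:
  fixes n :: nat and d g :: real
  assumes "n \<ge> 1" "0 < d" "d < pi/2" "0 < g" "g < pi/2" "real n * sin d < sin g"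
  shows "real n * d < g"
proof -
  have n1: "real n \<ge> 1" using assms(1) by simp
  have gn: "g / real n \<le> g" using n1 assms(4)
    by (simp add: divide_simps)
  have "sin g = sin (real n * (g / real n))" using assms(1) by simp
  also have "\<dots> \<le> real n * \<bar>sin (g / real n)\<bar>" by (rule order_trans[OF abs_ge_self abs_sin_nat])
  also have "\<bar>sin (g / real n)\<bar> = sin (g / real n)"
    using assms gn n1 by (intro abs_of_nonneg sin_ge_zero) auto
  finally have "real n * sin d < real n * sin (g / real n)" using assms(6) by linarith
  then have "sin d < sin (g / real n)" using assms(1)
    by (simp add: mult_less_cancel_left_pos)
  moreover note gn
  ultimately have "d < g / real n"
  proof -
    have "0 < g / real n" using assms n1 by simp
    then have h: "- (pi/2) \<le> d" "d \<le> pi/2" "- (pi/2) \<le> g / real n" "g / real n \<le> pi/2"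
      using assms gn by linarith+
    show ?thesis using sin_mono_less_eq[OF h] \<open>sin d < sin (g / real n)\<close> by simp
  qed
  then show ?thesis using assms(1) by (simp add: divide_simps mult.commute)
qed

lemma arg_half: assumes "0 < a" "a < pi" "cos a > 0" shows "a < pi/2"
proof (rule ccontr)
  assume "\<not> a < pi/2"
  then have "0 \<le> sin (a - pi/2)" using assms by (intro sin_ge_zero) auto
  moreover have "cos a = - sin (a - pi/2)" by (simp add: cos_sin_eq sin_minus[symmetric])
  ultimately have "cos a \<le> 0" by simp
  then show False using assms by simp
qed

lemma key_pos:
  fixes \<tau> :: nat and z :: complex and lam :: real
  assumes t1: "\<tau> \<ge> 1" and yp: "Im z > 0" and lp: "lam > 0"
    and eq: "z ^ \<tau> * (1 - z) = of_real lam"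
  shows "Re (z ^ \<tau>) < (real \<tau> + 1) * lam"
proof (rule ccontr)
  assume "\<not> ?thesis"
  then have ge: "Re (z ^ \<tau>) \<ge> (real \<tau> + 1) * lam" by simp
  define x where "x = Re z"
  define y where "y = Im z"
  define q2 where "q2 = (1 - x)^2 + y^2"
  define r2 where "r2 = x^2 + y^2"
  have y0: "y > 0" using yp y_def by simp
  have q2p: "q2 > 0" unfolding q2_def using y0 by (simp add: add_nonneg_pos)
  have nz: "1 - z \<noteq> 0" using yp by auto
  have zt: "z ^ \<tau> = of_real lam / (1 - z)" using eq nz by (simp add: field_simps)
  have "Re (z ^ \<tau>) = lam * (1 - x) / q2"
    unfolding zt q2_def x_def y_def by (simp add: Re_divide power2_eq_square)
  with ge have "lam * (1 - x) / q2 \<ge> (real \<tau> + 1) * lam" by simp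
  then have "lam * (1 - x) \<ge> (real \<tau> + 1) * lam * q2" using q2p by (simp add: field_simps)
  then have c1: "1 - x \<ge> (real \<tau> + 1) * q2" using lp
    by (metis mult.commute mult.left_commute mult_le_cancel_left_pos)
  have tq: "real \<tau> \<ge> 1" using t1 by simp
  have x1: "0 < 1 - x"
    using c1 q2p tq by (smt (verit) mult_pos_pos)
  have "q2 > (1-x)^2" unfolding q2_def using y0 by simp
  have "q2 \<le> (real \<tau> + 1) * q2" using tq q2p by (simp add: algebra_simps)
  then have "1 - x > (1 - x) * (1 - x)" using c1 \<open>q2 > (1-x)^2\<close> by (simp add: power2_eq_square)
  then have x0: "0 < x" using x1 by (simp add: mult_less_cancel_left1)
  have c2: "x - r2 \<ge> real \<tau> * q2" using c1 unfolding r2_def q2_def by (simp add: algebra_simps power2_eq_square)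
  have id: "r2 * q2 = (x - r2)^2 + y^2" unfolding r2_def q2_def by (simp add: algebra_simps power2_eq_square)
  have "(x - r2)^2 \<ge> (real \<tau> * q2)^2"
    using c2 q2p by (intro power_mono) auto
  moreover have "y^2 > 0" using y0 by simp
  ultimately have "r2 * q2 > (real \<tau>)^2 * q2 * q2" using id by (simp add: power2_eq_square power_mult_distrib algebra_simps)
  then have rq: "r2 > (real \<tau>)^2 * q2" using q2p by simp
  define r where "r = cmod z"
  define q where "q = cmod (1 - z)"
  have r_eq: "r = sqrt r2" unfolding r_def r2_def x_def y_def cmod_def by simp
  have q_eq: "q = sqrt q2" unfolding q_def q2_def x_def y_def cmod_def by simp
  have qp: "q > 0" using q_eq q2p by simp
  have rp: "r > 0" using r_eq rq q2p tq by (smt (verit) real_sqrt_gt_zero zero_le_power2 mult_nonneg_nonneg)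
  have "real \<tau> * q < r"
  proof -
    have "sqrt ((real \<tau>)^2 * q2) < sqrt r2" using rq by simp
    then show ?thesis using r_eq q_eq by (simp add: real_sqrt_mult)
  qed
  define d where "d = Arg z"
  define g where "g = - Arg (1 - z)"
  have z0: "z \<noteq> 0" using yp by auto
  have sd: "sin d = y / r" unfolding d_def r_def y_def using sin_Arg[OF z0] by simp
  have cd: "cos d = x / r" unfolding d_def r_def x_def using cos_Arg[OF z0] by simp
  have sg: "sin g = y / q" unfolding g_def q_def y_def using sin_Arg[OF nz] by simp
  have cg: "cos g = (1 - x) / q" unfolding g_def q_def x_def using cos_Arg[OF nz] by simp
  have d0: "0 < d" "d < pi" using Arg_lt_pi[of z] yp d_def by auto
  have d2: "d < pi/2" using arg_half[OF d0] cd x0 rp by simp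
  have g0: "0 < g" using Arg_neg_iff[of "1 - z"] yp g_def by simp
  have g1: "g < pi" using Arg_bounded[of "1 - z"] g_def by simp
  have g2: "g < pi/2" using arg_half[OF g0 g1] cg x1 qp by simp
  have "real \<tau> * sin d < sin g"
    unfolding sd sg using \<open>real \<tau> * q < r\<close> y0 rp qp
    by (simp add: field_simps mult_strict_left_mono)
  then have tdg: "real \<tau> * d < g" using angle_lemma[OF t1 d0(1) d2 g0 g2] by simp
  have "z ^ \<tau> * (1 - z) = rcis (r ^ \<tau>) (real \<tau> * d) * rcis q (- g)"
    unfolding r_def q_def d_def g_def minus_minus
    by (metis rcis_cmod_Arg DeMoivre2)
  also have "\<dots> = rcis (r ^ \<tau> * q) (real \<tau> * d - g)" by (simp add: rcis_mult)
  finally have "Im (z ^ \<tau> * (1 - z)) = r ^ \<tau> * q * sin (real \<tau> * d - g)" by simp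
  moreover have "sin (g - real \<tau> * d) > 0"
  proof -
    have "real \<tau> * d \<ge> 0" using d0 by simp
    then show ?thesis using tdg g2 by (intro sin_gt_zero) auto
  qed
  moreover have "sin (real \<tau> * d - g) = - sin (g - real \<tau> * d)"
    by (metis minus_diff_eq sin_minus)
  moreover have "r ^ \<tau> * q > 0" using rp qp by simp
  ultimately have "Im (z ^ \<tau> * (1 - z)) < 0"
    by (metis mult_pos_pos neg_less_0_iff_less mult_minus_right)
  then show False using eq by simp
qed


definition Qf :: "nat \<Rightarrow> complex \<Rightarrow> complex \<Rightarrow> complex" where
  "Qf \<tau> u v = (\<Sum>i<\<tau>+1. v ^ (\<tau> + 1 - Suc i) * u ^ i) - (\<Sum>i<\<tau>. v ^ (\<tau> - Suc i) * u ^ i)"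

lemma Qf_factor:
  "(u ^ (\<tau> + 1) - u ^ \<tau>) - (v ^ (\<tau> + 1) - v ^ \<tau>) = (u - v) * Qf \<tau> u v"
  unfolding Qf_def using power_diff_sumr2[of u "\<tau>+1" v] power_diff_sumr2[of u \<tau> v]
  by (simp add: algebra_simps)

lemma sum_same_pow:
  fixes v :: complex
  shows "(\<Sum>i<n. v ^ (n - Suc i) * v ^ i) = of_nat n * v ^ (n - 1)"
proof -
  have "(\<Sum>i<n. v ^ (n - Suc i) * v ^ i) = (\<Sum>i<n. v ^ (n - 1))"
    by (intro sum.cong refl) (simp add: power_add[symmetric])
  then show ?thesis by simp
qed

lemma Qf_diag: "Qf \<tau> v v = of_nat (\<tau> + 1) * v ^ \<tau> - of_nat \<tau> * v ^ (\<tau> - 1)"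
  unfolding Qf_def sum_same_pow by simp

lemma key_all:
  fixes \<tau> :: nat and z :: complex and lam :: real
  assumes t1: "\<tau> \<ge> 1" and y: "Im z \<noteq> 0" and lp: "lam > 0"
    and h: "hpoly \<tau> z lam = 0"
  shows "Re (z * Qf \<tau> z z) < 0"
proof -
  have eq: "z ^ \<tau> * (1 - z) = of_real lam"
    using h unfolding hpoly_def by (simp add: algebra_simps eq_neg_iff_add_eq_0)
  have lt: "Re (z ^ \<tau>) < (real \<tau> + 1) * lam"
  proof (cases "Im z > 0")
    case True then show ?thesis using key_pos[OF t1 True lp eq] by simp
  next
    case False
    then have "Im (cnj z) > 0" using y by simp
    moreover have "cnj z ^ \<tau> * (1 - cnj z) = of_real lam"
      using arg_cong[OF eq, of cnj] by simp
    ultimately have "Re (cnj z ^ \<tau>) < (real \<tau> + 1) * lam" using key_pos[OF t1 _ lp] by blast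
    then show ?thesis by (simp flip: complex_cnj_power)
  qed
  have "z * Qf \<tau> z z = of_nat (\<tau> + 1) * (z * z ^ \<tau>) - of_nat \<tau> * (z * z ^ (\<tau> - 1))"
    unfolding Qf_diag by (simp add: algebra_simps)
  also have "z * z ^ (\<tau> - 1) = z ^ \<tau>" using t1 by (metis Suc_diff_1 less_le_trans zero_less_one power_Suc)
  also have "z * z ^ \<tau> = z ^ \<tau> - of_real lam" using eq by (simp add: algebra_simps)
  finally have "z * Qf \<tau> z z = z ^ \<tau> - of_real ((real \<tau> + 1) * lam)"
    by (simp add: algebra_simps)
  then show ?thesis using lt by simp
qed

lemma Re_ofreal_mult: "Re (complex_of_real r * w) = r * Re w"
  by simp

lemma Re_cnj_div: "Re (cnj a / b) = Re (a * b) / (cmod b)^2"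
  by (simp add: Re_divide cmod_power2 algebra_simps)

lemma norm_sq_diff: "(cmod u)^2 - (cmod v)^2 = Re ((u - v) * cnj (u + v))"
  by (simp only: cmod_power2) (simp add: algebra_simps power2_eq_square)

lemma deriv_pos:
  fixes \<tau> :: nat and z :: "real \<Rightarrow> complex" and A :: "real set"
  assumes t1: "\<tau> \<ge> 1" and A: "open A" "A \<subseteq> {0<..}" and x0: "x0 \<in> A"
    and cont: "isCont z x0"
    and im: "\<And>lam. lam \<in> A \<Longrightarrow> Im (z lam) \<noteq> 0"
    and h: "\<And>lam. lam \<in> A \<Longrightarrow> hpoly \<tau> (z lam) lam = 0"
  shows "\<exists>D. ((\<lambda>l. (cmod (z l))^2) has_real_derivative D) (at x0) \<and> 0 < D"
proof -
  define z0 where "z0 = z x0"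
  define D where "D = Re (- cnj (z0 + z0) / Qf \<tau> z0 z0)"
  have kz: "Re (z0 * Qf \<tau> z0 z0) < 0"
    using key_all[OF t1 im[OF x0] _ h[OF x0]] x0 A unfolding z0_def by auto
  then have qnz: "Qf \<tau> z0 z0 \<noteq> 0" by auto
  have "D = - 2 * Re (cnj z0 / Qf \<tau> z0 z0)"
  proof -
    have E: "- cnj (z0 + z0) / Qf \<tau> z0 z0 = complex_of_real (-2) * (cnj z0 / Qf \<tau> z0 z0)"
      by (simp add: algebra_simps)
    show ?thesis unfolding D_def E Re_ofreal_mult by simp
  qed
  also have "\<dots> = - 2 * (Re (z0 * Qf \<tau> z0 z0) / (cmod (Qf \<tau> z0 z0))^2)"
    by (simp add: Re_cnj_div)
  finally have Dp: "D > 0" using kz qnz by (simp add: divide_neg_pos)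
  have zt: "(z \<longlongrightarrow> z0) (at x0)" using cont unfolding isCont_def z0_def .
  have Qt: "((\<lambda>l. Qf \<tau> (z l) z0) \<longlongrightarrow> Qf \<tau> z0 z0) (at x0)"
    unfolding Qf_def by (intro tendsto_intros zt)
  have Ft: "((\<lambda>l. Re (- cnj (z l + z0) / Qf \<tau> (z l) z0)) \<longlongrightarrow> D) (at x0)"
    unfolding D_def by (intro tendsto_intros zt Qt qnz)
  have ev: "\<forall>\<^sub>F l in at x0. l \<in> A \<and> l \<noteq> x0 \<and> Qf \<tau> (z l) z0 \<noteq> 0"
  proof -
    have e3: "\<forall>\<^sub>F l in at x0. l \<noteq> x0" by (simp add: eventually_at_filter)
    show ?thesis
      using eventually_conj[OF eventually_at_in_open'[OF A(1) x0]
          eventually_conj[OF e3 tendsto_imp_eventually_ne[OF Qt qnz]]] .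
  qed
  have "\<forall>\<^sub>F l in at x0. Re (- cnj (z l + z0) / Qf \<tau> (z l) z0)
      = ((cmod (z l))^2 - (cmod (z x0))^2) / (l - x0)"
    using ev
  proof (rule eventually_mono)
    fix l assume l: "l \<in> A \<and> l \<noteq> x0 \<and> Qf \<tau> (z l) z0 \<noteq> 0"
    have e1: "(z l) ^ (\<tau> + 1) - (z l) ^ \<tau> = - of_real l" using h[of l] l
      unfolding hpoly_def by (simp add: algebra_simps eq_neg_iff_add_eq_0)
    have e2: "z0 ^ (\<tau> + 1) - z0 ^ \<tau> = - of_real x0" using h[OF x0]
      unfolding hpoly_def z0_def by (simp add: algebra_simps eq_neg_iff_add_eq_0)
    have "(z l - z0) * Qf \<tau> (z l) z0 = - of_real (l - x0)"
      using Qf_factor[of "z l" \<tau> z0] e1 e2 by simp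
    then have dz: "z l - z0 = - of_real (l - x0) / Qf \<tau> (z l) z0"
      using l by (simp add: field_simps)
    have "(cmod (z l))^2 - (cmod (z x0))^2 = Re ((z l - z0) * cnj (z l + z0))"
      unfolding z0_def by (rule norm_sq_diff)
    also have "\<dots> = Re (of_real (l - x0) * (- cnj (z l + z0) / Qf \<tau> (z l) z0))"
      unfolding dz by (simp add: algebra_simps)
    also have "\<dots> = (l - x0) * Re (- cnj (z l + z0) / Qf \<tau> (z l) z0)"
      by (rule Re_ofreal_mult)
    finally show "Re (- cnj (z l + z0) / Qf \<tau> (z l) z0)
      = ((cmod (z l))^2 - (cmod (z x0))^2) / (l - x0)" using l by simp
  qed
  then have "((\<lambda>l. ((cmod (z l))^2 - (cmod (z x0))^2) / (l - x0)) \<longlongrightarrow> D) (at x0)"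
    by (rule Lim_transform_eventually[OF Ft])
  then have "((\<lambda>l. (cmod (z l))^2) has_real_derivative D) (at x0)"
    by (simp add: has_field_derivative_iff)
  then show ?thesis using Dp by blast
qed

theorem lemma3:
  fixes \<tau> :: nat and I :: "real set" and z :: "real \<Rightarrow> complex"
  assumes "\<tau> \<ge> 1"
    and "is_interval I" and "I \<subseteq> {0<..}"
    and "continuous_on I z"
    and "\<And>lam. lam \<in> I \<Longrightarrow> Im (z lam) \<noteq> 0"
    and "\<And>lam. lam \<in> I \<Longrightarrow> hpoly \<tau> (z lam) lam = 0"
  shows "strict_mono_on I (\<lambda>lam. cmod (z lam))"
proof (rule strict_mono_onI)
  fix a b assume ab: "a \<in> I" "b \<in> I" "a < b"
  have sub: "{a..b} \<subseteq> I"
  proof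
    fix x assume "x \<in> {a..b}"
    then show "x \<in> I" using mem_is_interval_1_I[OF assms(2) ab(1) ab(2)] by simp
  qed
  have "(\<lambda>l. (cmod (z l))^2) a < (\<lambda>l. (cmod (z l))^2) b"
  proof (rule DERIV_pos_imp_increasing_open[OF ab(3)])
    fix x assume x: "a < x" "x < b"
    have subo: "{a<..<b} \<subseteq> I" using sub by auto
    have cx: "isCont z x"
      using continuous_on_subset[OF assms(4) subo] x
      by (simp add: continuous_on_eq_continuous_at)
    show "\<exists>y. ((\<lambda>l. (cmod (z l))^2) has_real_derivative y) (at x) \<and> 0 < y"
    proof (rule deriv_pos[OF assms(1)])
      show "open {a<..<b}" by simp
      show "{a<..<b} \<subseteq> {0<..}" using subo assms(3) by blast
      show "x \<in> {a<..<b}" using x by simp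
      show "isCont z x" by (rule cx)
      show "\<And>lam. lam \<in> {a<..<b} \<Longrightarrow> Im (z lam) \<noteq> 0" using assms(5) subo by blast
      show "\<And>lam. lam \<in> {a<..<b} \<Longrightarrow> hpoly \<tau> (z lam) lam = 0" using assms(6) subo by blast
    qed
  next
    have "continuous_on {a..b} z" by (rule continuous_on_subset[OF assms(4) sub])
    then show "continuous_on {a..b} (\<lambda>l. (cmod (z l))^2)"
      by (intro continuous_intros)
  qed
  then have "(cmod (z a))^2 < (cmod (z b))^2" by simp
  then show "cmod (z a) < cmod (z b)" by (rule power_less_imp_less_base) simp
qed

end
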